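(* Let $(\mathcal{X},\kappa)$ be a finite similarity space with Gram matrix $\mathbf{K}$, and assume that the GAIT entropy $\mathbb{P}\mapsto\mathbb{H}^{\mathbf{K}}[\mathbb{P}]$ is concave on the probability simplex over $\mathcal{X}$. Let $\mathcal{Y}$ be a finite set and $(X,Y)$ a random pair with values in $\mathcal{X}\times\mathcal{Y}$. Then $$\mathbb{H}^{\mathbf{K},\mathbf{I}}[X\mid Y]\le\mathbb{H}^{\mathbf{K}}[X].$$
   Context: A finite similarity space $(\mathcal{X},\kappa)$ is a finite set with a symmetric $\kappa:\mathcal{X}\times\mathcal{X}\to[0,1]$ with $\kappa(x,x)=1$; its Gram matrix is $\mathbf{K}_{x,y}=\kappa(x,y)$. For a distribution $\mathbb{P}$ on $\mathcal{X}$, $(\mathbf{K}\mathbb{P})(x)=\sum_y\kappa(x,y)\mathbb{P}(y)$ and the GAIT entropy is $\mathbb{H}^{\mathbf{K}}[\mathbb{P}]=-\sum_x\mathbb{P}(x)\log(\mathbf{K}\mathbb{P})(x)$ (with $0\log0=0$); $\mathbb{H}^{\mathbf{K}}[X]$ is the GAIT entropy of the law of $X$. $\mathbf{I}$ denotes the identity kernel on $\mathcal{Y}$ ($1$ on the diagonal, $0$ elsewhere). For kernels $\kappa$, $\lambda$ with Gram matrices $\mathbf{K},\mathbf{\Lambda}$, $\mathbb{H}^{\mathbf{K}\otimes\mathbf{\Lambda}}[X,Y]$ is the GAIT entropy of the joint law of $(X,Y)$ with respect to the product kernel $\kappa(x,x')\lambda(y,y')$, and $\mathbb{H}^{\mathbf{K},\mathbf{\Lambda}}[X\mid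 Y]=\mathbb{H}^{\mathbf{K}\otimes\mathbf{\Lambda}}[X,Y]-\mathbb{H}^{\mathbf{\Lambda}}[Y]$. *)

theory Defs
  imports Main "HOL-Analysis.Analysis"
begin

definition similarity_kernel :: "('a::finite \<Rightarrow> 'a \<Rightarrow> real) \<Rightarrow> bool" where
  "similarity_kernel k \<longleftrightarrow>
     (\<forall>x y. k x y = k y x) \<and> (\<forall>x y. 0 \<le> k x y \<and> k x y \<le> 1) \<and> (\<forall>x. k x x = 1)"

definition prob_dist :: "('a::finite \<Rightarrow> real) \<Rightarrow> bool" where
  "prob_dist P \<longleftrightarrow> (\<forall>x. 0 \<le> P x) \<and> (\<Sum>x\<in>UNIV. P x) = 1"

definition kernel_apply :: "('a::finite \<Rightarrow> 'a \<Rightarrow> real) \<Rightarrow> ('a \<Rightarrow> real) \<Rightarrow> 'a \<Rightarrow> real" where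
  "kernel_apply k P x = (\<Sum>y\<in>UNIV. k x y * P y)"

(* GAIT entropy; note 0 * ln _ = 0 realizes the convention 0 log 0 = 0 *)
definition gait_entropy :: "('a::finite \<Rightarrow> 'a \<Rightarrow> real) \<Rightarrow> ('a \<Rightarrow> real) \<Rightarrow> real" where
  "gait_entropy k P = - (\<Sum>x\<in>UNIV. P x * ln (kernel_apply k P x))"

definition id_kernel :: "'a \<Rightarrow> 'a \<Rightarrow> real" where
  "id_kernel y y' = (if y = y' then 1 else 0)"

definition prod_kernel :: "('a \<Rightarrow> 'a \<Rightarrow> real) \<Rightarrow> ('b \<Rightarrow> 'b \<Rightarrow> real)
    \<Rightarrow> ('a \<times> 'b) \<Rightarrow> ('a \<times> 'b) \<Rightarrow> real" where
  "prod_kernel k l p q = k (fst p) (fst q) * l (snd p) (snd q)"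

definition marg1 :: "('a \<times> 'b::finite \<Rightarrow> real) \<Rightarrow> 'a \<Rightarrow> real" where
  "marg1 Q x = (\<Sum>y\<in>UNIV. Q (x, y))"

definition marg2 :: "('a::finite \<times> 'b \<Rightarrow> real) \<Rightarrow> 'b \<Rightarrow> real" where
  "marg2 Q y = (\<Sum>x\<in>UNIV. Q (x, y))"

(* H^{K,Lambda}[X|Y] = H^{K (x) Lambda}[X,Y] - H^Lambda[Y], for joint law Q of (X,Y) *)
definition gait_cond_entropy ::
  "('a::finite \<Rightarrow> 'a \<Rightarrow> real) \<Rightarrow> ('b::finite \<Rightarrow> 'b \<Rightarrow> real) \<Rightarrow> ('a \<times> 'b \<Rightarrow> real) \<Rightarrow> real" where
  "gait_cond_entropy k l Q = gait_entropy (prod_kernel k l) Q - gait_entropy l (marg2 Q)"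

definition gait_concave :: "('a::finite \<Rightarrow> 'a \<Rightarrow> real) \<Rightarrow> bool" where
  "gait_concave k \<longleftrightarrow>
     (\<forall>P Q t. prob_dist P \<longrightarrow> prob_dist Q \<longrightarrow> 0 \<le> t \<longrightarrow> t \<le> 1 \<longrightarrow>
        t * gait_entropy k P + (1 - t) * gait_entropy k Q
          \<le> gait_entropy k (\<lambda>x. t * P x + (1 - t) * Q x))"

end

theory Submission
  imports Defs
begin

lemma prob_dist_comb:
  fixes P :: "'i \<Rightarrow> 'a::finite \<Rightarrow> real"
  assumes "finite S" "(\<Sum>i\<in>S. w i) = 1" "\<And>i. i \<in> S \<Longrightarrow> w i \<ge> 0"
    "\<And>i. i \<in> S \<Longrightarrow> prob_dist (P i)"
  shows "prob_dist (\<lambda>x. \<Sum>i\<in>S. w i * P i x)"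
proof -
  have "(\<Sum>x\<in>UNIV. \<Sum>i\<in>S. w i * P i x) = (\<Sum>i\<in>S. w i * (\<Sum>x\<in>UNIV. P i x))"
    by (simp add: sum.swap[of _ UNIV] sum_distrib_left)
  also have "\<dots> = (\<Sum>i\<in>S. w i)" using assms(4) by (simp add: prob_dist_def)
  finally show ?thesis using assms unfolding prob_dist_def
    by (auto intro!: sum_nonneg)
qed

lemma jensen_gait:
  fixes k :: "'a::finite \<Rightarrow> 'a \<Rightarrow> real" and P :: "'i \<Rightarrow> 'a \<Rightarrow> real"
  assumes conc: "gait_concave k" and "finite S"
  shows "(\<Sum>i\<in>S. w i) = 1 \<Longrightarrow> (\<And>i. i \<in> S \<Longrightarrow> w i \<ge> 0) \<Longrightarrow>
    (\<And>i. i \<in> S \<Longrightarrow> prob_dist (P i)) \<Longrightarrow>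
    (\<Sum>i\<in>S. w i * gait_entropy k (P i)) \<le> gait_entropy k (\<lambda>x. \<Sum>i\<in>S. w i * P i x)"
  using assms(2)
proof (induction S arbitrary: w rule: finite_induct)
  case empty then show ?case by simp
next
  case (insert a S w)
  have wa: "w a \<ge> 0" using insert by simp
  have sS: "(\<Sum>i\<in>S. w i) = 1 - w a" using insert by simp
  have sSnn: "(\<Sum>i\<in>S. w i) \<ge> 0" using insert by (auto intro!: sum_nonneg)
  show ?case
  proof (cases "w a = 1")
    case True
    then have "sum w S = 0" using sS by simp
    then have z: "\<forall>i\<in>S. w i = 0" using insert.prems(2) insert.hyps
      by (subst (asm) sum_nonneg_eq_0_iff) auto
    then show ?thesis using True insert.hyps by simp
  next
    case False
    define s where "s = 1 - w a"
    have s: "s > 0" using False sSnn sS s_def by simp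
    define w' where "w' i = w i / s" for i
    have w'sum: "(\<Sum>i\<in>S. w' i) = 1" using sS s unfolding w'_def s_def
      by (simp add: sum_divide_distrib[symmetric])
    have w'nn: "\<And>i. i \<in> S \<Longrightarrow> w' i \<ge> 0" using insert.prems(2) s unfolding w'_def by simp
    have IH: "(\<Sum>i\<in>S. w' i * gait_entropy k (P i)) \<le> gait_entropy k (\<lambda>x. \<Sum>i\<in>S. w' i * P i x)"
      using insert.IH[OF w'sum w'nn] insert.prems(3) by simp
    define R where "R = (\<lambda>x. \<Sum>i\<in>S. w' i * P i x)"
    have Rp: "prob_dist R" unfolding R_def
      using prob_dist_comb[OF insert.hyps(1) w'sum w'nn, of P] insert.prems(3) by simp
    have "w a * gait_entropy k (P a) + (1 - w a) * gait_entropy k R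
          \<le> gait_entropy k (\<lambda>x. w a * P a x + (1 - w a) * R x)"
      using conc Rp insert.prems(3) wa s unfolding gait_concave_def s_def by auto
    moreover have "(\<lambda>x. w a * P a x + (1 - w a) * R x) = (\<lambda>x. \<Sum>i\<in>insert a S. w i * P i x)"
      using insert.hyps s unfolding R_def w'_def s_def
      by (auto simp: sum_distrib_left fun_eq_iff)
    moreover have "(\<Sum>i\<in>S. w i * gait_entropy k (P i)) = s * (\<Sum>i\<in>S. w' i * gait_entropy k (P i))"
      using s unfolding w'_def by (simp add: sum_distrib_left)
    moreover have "s * (\<Sum>i\<in>S. w' i * gait_entropy k (P i)) \<le> s * gait_entropy k R"
      using IH s unfolding R_def by simp
    ultimately show ?thesis using insert.hyps s_def by simp
  qed
qed

lemma sum_pair: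
  fixes f :: "'a::finite \<times> 'b::finite \<Rightarrow> real"
  shows "(\<Sum>p\<in>UNIV. f p) = (\<Sum>y\<in>UNIV. \<Sum>x\<in>UNIV. f (x, y))"
proof -
  have "(\<Sum>p\<in>UNIV. f p) = (\<Sum>p\<in>UNIV \<times> UNIV. f p)" by simp
  also have "\<dots> = (\<Sum>x\<in>UNIV. \<Sum>y\<in>UNIV. f (x, y))"
    by (subst sum.cartesian_product) simp
  also have "\<dots> = (\<Sum>y\<in>UNIV. \<Sum>x\<in>UNIV. f (x, y))"
    by (rule sum.swap)
  finally show ?thesis .
qed

theorem theorem5:
  fixes k :: "'x::finite \<Rightarrow> 'x \<Rightarrow> real"
    and Q :: "'x \<times> 'y::finite \<Rightarrow> real"
  assumes "similarity_kernel k"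
    and "gait_concave k"
    and "prob_dist Q"
  shows "gait_cond_entropy k id_kernel Q \<le> gait_entropy k (marg1 Q)"
proof -
  define q where "q = marg2 Q"
  define P where "P = (\<lambda>y x. Q (x, y) / q y)"
  define A where "A = (\<lambda>x y. \<Sum>x'\<in>UNIV. k x x' * Q (x', y))"
  define S where "S = {y. q y > 0}"
  have Qnn: "\<And>z. Q z \<ge> 0" using assms(3) by (auto simp: prob_dist_def)
  have knn: "\<And>x y. k x y \<ge> 0" and kd: "\<And>x. k x x = 1"
    using assms(1) by (auto simp: similarity_kernel_def)
  have qnn: "\<And>y. q y \<ge> 0" unfolding q_def marg2_def by (simp add: Qnn sum_nonneg)
  have Qle: "Q (x, y) \<le> q y" for x y
    unfolding q_def marg2_def by (rule member_le_sum) (auto simp: Qnn)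
  have QA: "Q (x, y) \<le> A x y" for x y
  proof -
    have "k x x * Q (x, y) \<le> A x y" unfolding A_def
      by (rule member_le_sum) (auto simp: Qnn knn)
    then show ?thesis using kd by simp
  qed
  have sumq: "(\<Sum>y\<in>UNIV. q y) = 1"
    using assms(3) unfolding q_def marg2_def prob_dist_def
    by (simp add: sum_pair)
  have kaprod: "kernel_apply (prod_kernel k id_kernel) Q (x, y) = A x y" for x y
  proof -
    have "kernel_apply (prod_kernel k id_kernel) Q (x, y)
        = (\<Sum>y'\<in>UNIV. \<Sum>x'\<in>UNIV. k x x' * id_kernel y y' * Q (x', y'))"
      unfolding kernel_apply_def prod_kernel_def
      by (simp add: sum_pair)
    also have "\<dots> = (\<Sum>y'\<in>UNIV. if y = y' then (\<Sum>x'\<in>UNIV. k x x' * Q (x', y')) else 0)"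
      by (rule sum.cong) (auto simp: id_kernel_def)
    also have "\<dots> = A x y"
      unfolding A_def by simp
    finally show ?thesis .
  qed
  have kaP: "kernel_apply k (P y) x = A x y / q y" for x y
    unfolding kernel_apply_def P_def A_def by (simp add: sum_divide_distrib)
  have termeq: "Q (x, y) * ln (A x y) - Q (x, y) * ln (q y) = Q (x, y) * ln (kernel_apply k (P y) x)" for x y
  proof (cases "Q (x, y) = 0")
    case True then show ?thesis by simp
  next
    case False
    then have "Q (x, y) > 0" using Qnn[of "(x,y)"] by simp
    then have "q y > 0" "A x y > 0" using Qle[of x y] QA[of x y] by auto
    then show ?thesis by (simp add: kaP ln_div algebra_simps)
  qed
  have Hy: "gait_entropy id_kernel q = - (\<Sum>y\<in>UNIV. \<Sum>x\<in>UNIV. Q (x, y) * ln (q y))"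
  proof -
    have "kernel_apply id_kernel q y = q y" for y
    proof -
      have "kernel_apply id_kernel q y = (\<Sum>y'\<in>UNIV. if y = y' then q y' else 0)"
        unfolding kernel_apply_def by (rule sum.cong) (auto simp: id_kernel_def)
      then show ?thesis by simp
    qed
    then show ?thesis unfolding gait_entropy_def
      by (simp add: q_def marg2_def sum_distrib_right)
  qed
  have Hxy: "gait_entropy (prod_kernel k id_kernel) Q = - (\<Sum>y\<in>UNIV. \<Sum>x\<in>UNIV. Q (x, y) * ln (A x y))"
    unfolding gait_entropy_def kaprod
    by (simp add: sum_pair kaprod)
  have cond: "gait_cond_entropy k id_kernel Q = (\<Sum>y\<in>UNIV. q y * gait_entropy k (P y))"
  proof -
    have "gait_cond_entropy k id_kernel Q
        = (\<Sum>y\<in>UNIV. - (\<Sum>x\<in>UNIV. Q (x, y) * ln (A x y) - Q (x, y) * ln (q y)))"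
      unfolding gait_cond_entropy_def Hxy q_def[symmetric] Hy
      by (simp add: sum_subtractf sum_negf)
    also have "\<dots> = (\<Sum>y\<in>UNIV. - (\<Sum>x\<in>UNIV. Q (x, y) * ln (kernel_apply k (P y) x)))"
      by (simp add: termeq)
    also have "\<dots> = (\<Sum>y\<in>UNIV. q y * gait_entropy k (P y))"
    proof (rule sum.cong[OF refl])
      fix y
      show "- (\<Sum>x\<in>UNIV. Q (x, y) * ln (kernel_apply k (P y) x)) = q y * gait_entropy k (P y)"
      proof (cases "q y = 0")
        case True
        then have "Q (x, y) = 0" for x using Qle[of x y] Qnn[of "(x,y)"] by simp
        then show ?thesis using True by simp
      next
        case False
        then show ?thesis unfolding gait_entropy_def P_def
          by (simp add: sum_distrib_left)
      qed
    qed
    finally show ?thesis .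
  qed
  also have "\<dots> = (\<Sum>y\<in>S. q y * gait_entropy k (P y))"
    using qnn by (intro sum.mono_neutral_right) (auto simp: S_def order.order_iff_strict)
  also have "\<dots> \<le> gait_entropy k (\<lambda>x. \<Sum>y\<in>S. q y * P y x)"
  proof (rule jensen_gait[OF assms(2)])
    show "(\<Sum>y\<in>S. q y) = 1"
      using sumq qnn by (subst (asm) sum.mono_neutral_right[of UNIV S]) (auto simp: S_def order.order_iff_strict)
    show "prob_dist (P y)" if "y \<in> S" for y
    proof -
      have "q y > 0" using that S_def by simp
      moreover have "(\<Sum>x\<in>UNIV. Q (x, y)) = q y" by (simp add: q_def marg2_def)
      ultimately show ?thesis unfolding prob_dist_def P_def
        by (auto simp: Qnn sum_divide_distrib[symmetric])
    qed
  qed (auto simp: qnn)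
  also have "(\<lambda>x. \<Sum>y\<in>S. q y * P y x) = marg1 Q"
  proof
    fix x
    have "(\<Sum>y\<in>S. q y * P y x) = (\<Sum>y\<in>S. Q (x, y))"
      unfolding P_def by (auto simp: S_def intro!: sum.cong)
    also have "\<dots> = (\<Sum>y\<in>UNIV. Q (x, y))"
    proof (rule sum.mono_neutral_left)
      show "\<forall>y\<in>UNIV - S. Q (x, y) = 0"
        using Qle Qnn qnn by (auto simp: S_def) (meson antisym not_less order_trans)
    qed auto
    finally show "(\<Sum>y\<in>S. q y * P y x) = marg1 Q x" by (simp add: marg1_def)
  qed
  finally show ?thesis .
qed

end
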